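(* Let $G=(V,E,\mathcal{P},s,t,c)$ be an update flow network with exactly two update flow pairs $\mathcal{P}=\{B,R\}$, $B=(B^o,B^u)$ of demand $d_B$ and $R=(R^o,R^u)$ of demand $d_R$, such that $B^o\cup B^u$ and $R^o\cup R^u$ are acyclic. If the dependency graph $D$ of $G$ contains a directed cycle, then there is no feasible update sequence for $G$.
   Context: A flow network is $G=(V,E,s,t,c)$ where $(V,E)$ is a directed graph, $s,t\in V$, and $c\colon E\to\mathbb{N}$ is a capacity function. An $(s,t)$-flow of demand $d\in\mathbb{N}$ is a directed path $F$ from $s$ to $t$ with $d\le c(e)$ for all $e\in E(F)$. An update flow pair $P=(F^o,F^u)$ consists of two $(s,t)$-flows, the old flow $F^o$ and the new flow $F^u$, both of the same demand $d_P$. An update flow network $G=(V,E,\mathcal{P},s,t,c)$ is a flow network together with a finite family $\mathcal{P}$ of update flow pairs whose old flows are jointly valid: $\sum_{P\in\mathcal{P}:\,e\in E(F^o_P)} d_P\le c(e)$ for every $e\in E$. An update is an element $(v,P)\in V\times\mathcal{P}$. For a set $U\subseteq V\times\mathcal{P}$ of updates and a pair $P=(F^o,F^u)$, an edge $(u,v)\in E(F^o)\cup E(F^u)$ is active for $P$ with respect to $U$ if either $(u,P)\notin U$ and $(u,v)\in E(F^o)$, or $(u,P)\in U$ and $(u,v)\in E(F^u)$; otherwise it is inactive. $P$ is transient for $U$ if the graph formed by the edges active for $P$ w.r.t. $U$ contains exactly one directed $s$–$t$ path $T_{P,U}$. The family $\mathcal{P}$ is a transient family for $U$ if every $P\in\mathcal{P}$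 is transient for $U$ and $\sum_{P\in\mathcal{P}:\,e\in E(T_{P,U})} d_P\le c(e)$ for every edge $e$. An update sequence is an ordered partition $\mathfrak{R}=(\mathfrak{r}_1,\dots,\mathfrak{r}_\ell)$ of $V\times\mathcal{P}$ into rounds; it is feasible if for every $i$ and every $S\subseteq\mathfrak{r}_i$, $\mathcal{P}$ is a transient family for $S\cup\mathfrak{r}_1\cup\dots\cup\mathfrak{r}_{i-1}$. Blocks: for a pair $P=(F^o,F^u)$ with $F^o\cup F^u$ acyclic, fix a topological order $\prec$ of $F^o\cup F^u$ and let $z_1\prec\dots\prec z_k$ be the vertices of $V(F^o)\cap V(F^u)$. For $j\in\{1,\dots,k-1\}$, the $j$-th block of $P$ (an $P$-block) is the subgraph of $F^o\cup F^u$ induced by $\{v: z_j\preceq v\preceq z_{j+1}\}$. Dependency graph: for $I,J\in\{B,R\}$ with $I\ne J$, an $I$-block $b_1$ depends on a $J$-block $b_2$ if there is an edge $e\in E(b_1)\cap E(I^u)\cap E(b_2)\cap E(J^o)$ with $c(e)<d_I+d_J$. The dependency graph $D$ of $G$ is the directed graph whose vertices are all blocks of $B$ and of $R$, with an arc from $b_1$ to $b_2$ whenever $b_1$ depends on $b_2$. *)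

theory Defs
  imports Main
begin

text \<open>The two update flow pairs B and R are indexed by the datatype pid.
  Vertices have type 'v, edges are pairs, flows are (simple) vertex lists.\<close>

datatype pid = PB | PR

definition pedges :: "'v list \<Rightarrow> ('v \<times> 'v) set" where
  "pedges xs = set (zip xs (tl xs))"

definition is_st_path :: "('v \<times> 'v) set \<Rightarrow> 'v \<Rightarrow> 'v \<Rightarrow> 'v list \<Rightarrow> bool" where
  "is_st_path E s t xs \<longleftrightarrow> xs \<noteq> [] \<and> distinct xs \<and> hd xs = s \<and> last xs = t \<and> pedges xs \<subseteq> E"

definition is_flow :: "'v set \<Rightarrow> ('v \<times> 'v) set \<Rightarrow> 'v \<Rightarrow> 'v \<Rightarrow> ('v \<times> 'v \<Rightarrow> nat) \<Rightarrow> nat \<Rightarrow> 'v list \<Rightarrow> bool" where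
  "is_flow V E s t c d F \<longleftrightarrow> is_st_path E s t F \<and> set F \<subseteq> V \<and> (\<forall>e\<in>pedges F. d \<le> c e)"

definition update_flow_network ::
  "'v set \<Rightarrow> ('v \<times> 'v) set \<Rightarrow> 'v \<Rightarrow> 'v \<Rightarrow> ('v \<times> 'v \<Rightarrow> nat) \<Rightarrow> (pid \<Rightarrow> 'v list) \<Rightarrow> (pid \<Rightarrow> 'v list) \<Rightarrow> (pid \<Rightarrow> nat) \<Rightarrow> bool" where
  "update_flow_network V E s t c Fo Fu d \<longleftrightarrow>
     finite V \<and> E \<subseteq> V \<times> V \<and> s \<in> V \<and> t \<in> V \<and>
     (\<forall>P. is_flow V E s t c (d P) (Fo P) \<and> is_flow V E s t c (d P) (Fu P)) \<and>
     (\<forall>e\<in>E. (\<Sum>P\<in>{PB, PR}. if e \<in> pedges (Fo P) then d P else 0) \<le> c e)"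

definition active_edges ::
  "(pid \<Rightarrow> 'v list) \<Rightarrow> (pid \<Rightarrow> 'v list) \<Rightarrow> ('v \<times> pid) set \<Rightarrow> pid \<Rightarrow> ('v \<times> 'v) set" where
  "active_edges Fo Fu U P =
     {(u, v). ((u, P) \<notin> U \<and> (u, v) \<in> pedges (Fo P)) \<or> ((u, P) \<in> U \<and> (u, v) \<in> pedges (Fu P))}"

definition transient ::
  "'v \<Rightarrow> 'v \<Rightarrow> (pid \<Rightarrow> 'v list) \<Rightarrow> (pid \<Rightarrow> 'v list) \<Rightarrow> ('v \<times> pid) set \<Rightarrow> pid \<Rightarrow> bool" where
  "transient s t Fo Fu U P \<longleftrightarrow> (\<exists>!xs. is_st_path (active_edges Fo Fu U P) s t xs)"

definition trans_path ::
  "'v \<Rightarrow> 'v \<Rightarrow> (pid \<Rightarrow> 'v list) \<Rightarrow> (pid \<Rightarrow> 'v list) \<Rightarrow> ('v \<times> pid) set \<Rightarrow> pid \<Rightarrow> 'v list" where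
  "trans_path s t Fo Fu U P = (THE xs. is_st_path (active_edges Fo Fu U P) s t xs)"

definition transient_family ::
  "('v \<times> 'v) set \<Rightarrow> 'v \<Rightarrow> 'v \<Rightarrow> ('v \<times> 'v \<Rightarrow> nat) \<Rightarrow> (pid \<Rightarrow> 'v list) \<Rightarrow> (pid \<Rightarrow> 'v list) \<Rightarrow> (pid \<Rightarrow> nat) \<Rightarrow> ('v \<times> pid) set \<Rightarrow> bool" where
  "transient_family E s t c Fo Fu d U \<longleftrightarrow>
     (\<forall>P. transient s t Fo Fu U P) \<and>
     (\<forall>e\<in>E. (\<Sum>P\<in>{PB, PR}. if e \<in> pedges (trans_path s t Fo Fu U P) then d P else 0) \<le> c e)"

definition update_sequence :: "'v set \<Rightarrow> ('v \<times> pid) set list \<Rightarrow> bool" where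
  "update_sequence V rs \<longleftrightarrow>
     (\<forall>r\<in>set rs. r \<noteq> {}) \<and>
     (\<forall>i<length rs. \<forall>j<length rs. i \<noteq> j \<longrightarrow> rs ! i \<inter> rs ! j = {}) \<and>
     \<Union>(set rs) = V \<times> UNIV"

definition feasible_update_sequence ::
  "'v set \<Rightarrow> ('v \<times> 'v) set \<Rightarrow> 'v \<Rightarrow> 'v \<Rightarrow> ('v \<times> 'v \<Rightarrow> nat) \<Rightarrow> (pid \<Rightarrow> 'v list) \<Rightarrow> (pid \<Rightarrow> 'v list) \<Rightarrow> (pid \<Rightarrow> nat) \<Rightarrow> ('v \<times> pid) set list \<Rightarrow> bool" where
  "feasible_update_sequence V E s t c Fo Fu d rs \<longleftrightarrow>
     update_sequence V rs \<and>
     (\<forall>i<length rs. \<forall>S\<subseteq>rs ! i. transient_family E s t c Fo Fu d (S \<union> \<Union>(set (take i rs))))"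

text \<open>Position of v in the list L (length L if absent).\<close>
definition pos :: "'v list \<Rightarrow> 'v \<Rightarrow> nat" where
  "pos L v = length (takeWhile (\<lambda>x. x \<noteq> v) L)"

definition topo_order :: "('v \<times> 'v) set \<Rightarrow> 'v set \<Rightarrow> 'v list \<Rightarrow> bool" where
  "topo_order Es Vs L \<longleftrightarrow> distinct L \<and> set L = Vs \<and>
     (\<forall>(u, v)\<in>Es. pos L u < pos L v)"

text \<open>Common vertices z_1, ..., z_k of F^o and F^u in topological order.\<close>
definition common_vs :: "'v list \<Rightarrow> 'v list \<Rightarrow> 'v list \<Rightarrow> 'v list" where
  "common_vs Fo Fu L = filter (\<lambda>v. v \<in> set Fo \<and> v \<in> set Fu) L"

definition num_blocks :: "(pid \<Rightarrow> 'v list) \<Rightarrow> (pid \<Rightarrow> 'v list) \<Rightarrow> (pid \<Rightarrow> 'v list) \<Rightarrow> pid \<Rightarrow> nat" where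
  "num_blocks Fo Fu L P = length (common_vs (Fo P) (Fu P) (L P)) - 1"

text \<open>Vertices of the block j (0-based, i.e. the (j+1)-th block) of pair P:
  all v with z_(j+1) \<preceq> v \<preceq> z_(j+2).\<close>
definition block_vertices :: "(pid \<Rightarrow> 'v list) \<Rightarrow> (pid \<Rightarrow> 'v list) \<Rightarrow> (pid \<Rightarrow> 'v list) \<Rightarrow> pid \<Rightarrow> nat \<Rightarrow> 'v set" where
  "block_vertices Fo Fu L P j =
     (let zs = common_vs (Fo P) (Fu P) (L P) in
      {v \<in> set (L P). pos (L P) (zs ! j) \<le> pos (L P) v \<and>
                      pos (L P) v \<le> pos (L P) (zs ! Suc j)})"

definition block_edges :: "(pid \<Rightarrow> 'v list) \<Rightarrow> (pid \<Rightarrow> 'v list) \<Rightarrow> (pid \<Rightarrow> 'v list) \<Rightarrow> pid \<Rightarrow> nat \<Rightarrow> ('v \<times> 'v) set" where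
  "block_edges Fo Fu L P j =
     {(u, v) \<in> pedges (Fo P) \<union> pedges (Fu P).
        u \<in> block_vertices Fo Fu L P j \<and> v \<in> block_vertices Fo Fu L P j}"

definition dep_graph ::
  "('v \<times> 'v \<Rightarrow> nat) \<Rightarrow> (pid \<Rightarrow> 'v list) \<Rightarrow> (pid \<Rightarrow> 'v list) \<Rightarrow> (pid \<Rightarrow> nat) \<Rightarrow> (pid \<Rightarrow> 'v list) \<Rightarrow> ((pid \<times> nat) \<times> (pid \<times> nat)) set" where
  "dep_graph c Fo Fu d L =
     {((I, j), (J, j')). I \<noteq> J \<and> j < num_blocks Fo Fu L I \<and> j' < num_blocks Fo Fu L J \<and>
        (\<exists>e. e \<in> block_edges Fo Fu L I j \<and> e \<in> pedges (Fu I) \<and>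
             e \<in> block_edges Fo Fu L J j' \<and> e \<in> pedges (Fo J) \<and> c e < d I + d J)}"

end

theory Submission
  imports Defs
begin


lemma pos_Nil[simp]: "pos [] v = 0" by (simp add: pos_def)
lemma pos_Cons[simp]: "pos (x#xs) v = (if x = v then 0 else Suc (pos xs v))"
  by (simp add: pos_def)

lemma pos_less: "v \<in> set L \<Longrightarrow> pos L v < length L"
  by (induction L) auto
lemma nth_pos: "v \<in> set L \<Longrightarrow> L ! pos L v = v"
  by (induction L) auto
lemma pos_nth: "distinct L \<Longrightarrow> i < length L \<Longrightarrow> pos L (L ! i) = i"
  by (induction L arbitrary: i) (auto simp: nth_Cons split: nat.splits)
lemma pos_inj: "x \<in> set L \<Longrightarrow> y \<in> set L \<Longrightarrow> pos L x = pos L y \<Longrightarrow> x = y"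
  by (metis nth_pos)

lemma pedges_Nil[simp]: "pedges [] = {}" by (simp add: pedges_def)
lemma pedges_single[simp]: "pedges [x] = {}" by (simp add: pedges_def)
lemma pedges_CC[simp]: "pedges (x#y#zs) = insert (x,y) (pedges (y#zs))" by (simp add: pedges_def)

lemma pedges_nth: "(x,y) \<in> pedges xs \<longleftrightarrow> (\<exists>i. Suc i < length xs \<and> xs!i = x \<and> xs!Suc i = y)"
  unfolding pedges_def in_set_zip
  apply (auto simp: nth_tl)
  apply (rule_tac x=n in exI)
  apply simp
  done

lemma pedges_succ:
  assumes "distinct xs" "(xs!k, y) \<in> pedges xs" "k < length xs"
  shows "Suc k < length xs \<and> y = xs ! Suc k"
proof -
  obtain i where i: "Suc i < length xs" "xs!i = xs!k" "xs!Suc i = y" using assms(2) pedges_nth by metis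
  then have "i = k" using assms(1,3) nth_eq_iff_index_eq by fastforce
  then show ?thesis using i by auto
qed

lemma pedges_fst_set: "(x,y) \<in> pedges xs \<Longrightarrow> x \<in> set xs"
  unfolding pedges_nth by auto
lemma pedges_snd_set: "(x,y) \<in> pedges xs \<Longrightarrow> y \<in> set xs"
  unfolding pedges_nth by auto

lemma path_succ_exists:
  assumes "x \<in> set T" "x \<noteq> last T"
  shows "\<exists>w. (x,w) \<in> pedges T"
proof -
  obtain i where i: "i < length T" "T!i = x" using assms(1) by (metis in_set_conv_nth)
  have "Suc i < length T"
  proof (rule ccontr)
    assume "\<not> ?thesis"
    then have "i = length T - 1" using i by auto
    then have "x = last T" using i by (metis last_conv_nth list.size(3) not_less0)
    then show False using assms(2) by simp
  qed
  then show ?thesis using i pedges_nth by metis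
qed

lemma hit:
  fixes f :: "'a \<Rightarrow> nat"
  shows "T \<noteq> [] \<Longrightarrow> f (hd T) \<le> p \<Longrightarrow> p \<le> f (last T) \<Longrightarrow> \<forall>(x,y)\<in>pedges T. f x < p \<longrightarrow> f y \<le> p
    \<Longrightarrow> \<exists>x\<in>set T. f x = p"
proof (induction T)
  case Nil then show ?case by simp
next
  case (Cons x ys)
  show ?case
  proof (cases "f x = p")
    case True then show ?thesis by simp
  next
    case False
    then have lt: "f x < p" using Cons.prems by simp
    have ne: "ys \<noteq> []" using Cons.prems lt by auto
    then obtain y zs where ys: "ys = y # zs" by (cases ys) auto
    have "f y \<le> p" using Cons.prems(4) lt ys by auto
    moreover have "\<forall>(x,y)\<in>pedges ys. f x < p \<longrightarrow> f y \<le> p" using Cons.prems(4) ys by auto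
    ultimately have "\<exists>x\<in>set ys. f x = p" using Cons.IH ne Cons.prems(3) ys by auto
    then show ?thesis by auto
  qed
qed

lemma mono_path:
  assumes "\<forall>(u,v)\<in>pedges F. pos L u < pos L v"
  shows "k < m \<Longrightarrow> m < length F \<Longrightarrow> pos L (F!k) < pos L (F!m)"
proof (induction m)
  case 0 then show ?case by simp
next
  case (Suc m)
  have e: "(F!m, F!Suc m) \<in> pedges F" unfolding pedges_nth using Suc.prems(2) by blast
  then have "pos L (F!m) < pos L (F!Suc m)" using assms by blast
  show ?case
  proof (cases "k = m")
    case True then show ?thesis using \<open>pos L (F!m) < pos L (F!Suc m)\<close> by simp
  next
    case False
    then have "k < m" using Suc.prems(1) by simp
    then have "pos L (F!k) < pos L (F!m)" using Suc.IH Suc.prems(2) by simp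
    then show ?thesis using \<open>pos L (F!m) < pos L (F!Suc m)\<close> by simp
  qed
qed

lemma mono_path_rev:
  assumes "\<forall>(u,v)\<in>pedges F. pos L u < pos L v" "k < length F" "m < length F"
    "pos L (F!k) < pos L (F!m)"
  shows "k < m"
proof (rule ccontr)
  assume "\<not> k < m"
  then have "m = k \<or> m < k" by auto
  then show False
  proof
    assume "m = k" then show False using assms(4) by simp
  next
    assume "m < k"
    then have "pos L (F!m) < pos L (F!k)" using mono_path[OF assms(1)] assms(2) by blast
    then show False using assms(4) by simp
  qed
qed

lemma mono_path_rev_le:
  assumes "\<forall>(u,v)\<in>pedges F. pos L u < pos L v" "k < length F" "m < length F"
    "pos L (F!k) \<le> pos L (F!m)"
  shows "k \<le> m"
proof (rule ccontr)
  assume "\<not> k \<le> m"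
  then have "m < k" by auto
  then have "pos L (F!m) < pos L (F!k)" using mono_path[OF assms(1)] assms(2) by blast
  then show False using assms(4) by simp
qed




lemma block_edge_in_T:
  fixes F G L :: "'v list"
  assumes dF: "distinct F" and dG: "distinct G" and neF: "F \<noteq> []" and neG: "G \<noteq> []"
    and hF: "hd F = s" "last F = t" and hG: "hd G = s" "last G = t"
    and dL: "distinct L" and sL: "set L = set F \<union> set G"
    and topo: "\<forall>(u,v)\<in>pedges F \<union> pedges G. pos L u < pos L v"
    and zs: "zs = filter (\<lambda>v. v \<in> set F \<and> v \<in> set G) L" "Suc j < length zs"
    and e: "(u,v) \<in> pedges F" "pos L (zs!j) \<le> pos L u" "pos L v \<le> pos L (zs!Suc j)"
    and T: "is_st_path A s t T" "A \<subseteq> pedges F \<union> pedges G"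
    and succ: "\<forall>w. (zs!j, w) \<in> pedges T \<longrightarrow> (zs!j,w) \<in> pedges F"
  shows "(u,v) \<in> pedges T"
proof -
  define z1 where "z1 = zs!j"
  define z2 where "z2 = zs!Suc j"
  have monoF: "\<forall>(u,v)\<in>pedges F. pos L u < pos L v" and monoG: "\<forall>(u,v)\<in>pedges G. pos L u < pos L v"
    using topo by auto
  have z1s: "z1 \<in> set zs" "z2 \<in> set zs" using zs(2) unfolding z1_def z2_def by auto
  then have z1F: "z1 \<in> set F" "z1 \<in> set G" "z2 \<in> set F" "z2 \<in> set G" using zs(1) by auto
  have "sorted_wrt (\<lambda>x y. pos L x < pos L y) L"
    unfolding sorted_wrt_iff_nth_less
  proof (intro allI impI)
    fix i j assume "i < j" "j < length L"
    then show "pos L (L!i) < pos L (L!j)" using pos_nth[OF dL, of i] pos_nth[OF dL, of j] by simp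
  qed
  then have srt: "sorted_wrt (\<lambda>x y. pos L x < pos L y) zs" unfolding zs(1) by (rule sorted_wrt_filter)
  have zsord: "\<And>q q'. q < q' \<Longrightarrow> q' < length zs \<Longrightarrow> pos L (zs!q) < pos L (zs!q')"
    using srt unfolding sorted_wrt_iff_nth_less by blast
  obtain a where a: "a < length F" "F!a = z1" using z1F by (metis in_set_conv_nth)
  obtain b where b: "b < length F" "F!b = z2" using z1F by (metis in_set_conv_nth)
  have z12: "pos L z1 < pos L z2" using zsord zs(2) unfolding z1_def z2_def by simp
  have ab: "a < b" using mono_path_rev[OF monoF a(1) b(1)] a b z12 by simp
  obtain k where k: "Suc k < length F" "F!k = u" "F!Suc k = v" using e(1) pedges_nth by metis
  have ak: "a \<le> k" using mono_path_rev_le[OF monoF a(1), of k] a k e(2) z1_def by simp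
  have kb: "Suc k \<le> b" using mono_path_rev_le[OF monoF k(1) b(1)] b k e(3) z2_def by simp
  have noncommon: "F!m \<notin> set G" if m: "a < m" "m < b" for m
  proof
    assume mG: "F!m \<in> set G"
    have mF: "F!m \<in> set F" using m b by simp
    then have "F!m \<in> set L" using sL by blast
    then have "F!m \<in> set zs" unfolding zs(1) set_filter using mG mF by blast
    then obtain q where q: "q < length zs" "zs!q = F!m" by (metis in_set_conv_nth)
    have p1: "pos L z1 < pos L (F!m)" using mono_path[OF monoF, of a m] a m b by simp
    have p2: "pos L (F!m) < pos L z2" using mono_path[OF monoF, of m b] a m b by simp
    show False
    proof (cases "q \<le> j")
      case True
      have "pos L (zs!q) \<le> pos L z1"
      proof (cases "q = j")
        case True then show ?thesis unfolding z1_def by simp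
      next
        case False then have "q < j" using \<open>q \<le> j\<close> by simp
        then show ?thesis unfolding z1_def using zsord[of q j] zs(2) by simp
      qed
      then show False using p1 q by simp
    next
      case False
      have "pos L z2 \<le> pos L (zs!q)"
      proof (cases "q = Suc j")
        case True then show ?thesis unfolding z2_def by simp
      next
        case False then have "Suc j < q" using \<open>\<not> q \<le> j\<close> by simp
        then show ?thesis unfolding z2_def using zsord[of "Suc j" q] q by simp
      qed
      then show False using p2 q by simp
    qed
  qed
  have Tp: "T \<noteq> []" "distinct T" "hd T = s" "last T = t" "pedges T \<subseteq> pedges F \<union> pedges G"
  proof -
    have "T \<noteq> [] \<and> distinct T \<and> hd T = s \<and> last T = t \<and> pedges T \<subseteq> A"
      using T(1) unfolding is_st_path_def by simp
    then show "T \<noteq> []" "distinct T" "hd T = s" "last T = t" "pedges T \<subseteq> pedges F \<union> pedges G"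
      using T(2) by blast+
  qed
  have tF: "t = F ! (length F - 1)" using hF neF by (simp add: last_conv_nth)
  have sF: "s = F ! 0" using hF neF by (simp add: hd_conv_nth)
  have setT: "set T \<subseteq> set L"
  proof
    fix x assume x: "x \<in> set T"
    show "x \<in> set L"
    proof (cases "x = last T")
      case True
      have "t \<in> set F" using hF(2) neF last_in_set by metis
      then show ?thesis using True Tp(4) sL by blast
    next
      case False
      then obtain w where "(x,w) \<in> pedges T" using path_succ_exists x by metis
      then have "(x,w) \<in> pedges F \<or> (x,w) \<in> pedges G" using Tp(5) by blast
      then show ?thesis using sL by (metis Un_iff pedges_fst_set)
    qed
  qed
  have "\<exists>x\<in>set T. pos L x = pos L z1"
  proof (rule hit)
    show "T \<noteq> []" using Tp by simp
    show "pos L (hd T) \<le> pos L z1"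
      using Tp(3) sF a mono_path[OF monoF, of 0 a] by (cases "a = 0") auto
    show "pos L z1 \<le> pos L (last T)"
    proof -
      have "a < length F - 1" using ab b by linarith
      then have "pos L (F!a) < pos L (F!(length F - 1))" using mono_path[OF monoF, of a "length F - 1"] neF by simp
      then show ?thesis using Tp(4) tF a by simp
    qed
    show "\<forall>(x,y)\<in>pedges T. pos L x < pos L z1 \<longrightarrow> pos L y \<le> pos L z1"
    proof (intro ballI impI, clarify)
      fix x y assume xy: "(x,y) \<in> pedges T" "pos L x < pos L z1"
      show "pos L y \<le> pos L z1"
      proof (rule ccontr)
        assume "\<not> ?thesis"
        then have yz: "pos L z1 < pos L y" by simp
        have "(x,y) \<in> pedges F \<or> (x,y) \<in> pedges G" using xy Tp by auto
        then show False
        proof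
          assume "(x,y) \<in> pedges F"
          then obtain i where i: "Suc i < length F" "F!i = x" "F!Suc i = y" using pedges_nth by metis
          have "i < a" using mono_path_rev[OF monoF, of i a] i a xy by simp
          moreover have "a < Suc i" using mono_path_rev[OF monoF, of a "Suc i"] i a yz by simp
          ultimately show False by simp
        next
          assume "(x,y) \<in> pedges G"
          then obtain i where i: "Suc i < length G" "G!i = x" "G!Suc i = y" using pedges_nth by metis
          obtain a' where a': "a' < length G" "G!a' = z1" using z1F by (metis in_set_conv_nth)
          have "i < a'" using mono_path_rev[OF monoG, of i a'] i a' xy by simp
          moreover have "a' < Suc i" using mono_path_rev[OF monoG, of a' "Suc i"] i a' yz by simp
          ultimately show False by simp
        qed
      qed
    qed
  qed
  then obtain x where "x \<in> set T" "pos L x = pos L z1" by blast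
  then have z1T: "z1 \<in> set T" using pos_inj[of x L z1] setT z1F sL by auto
  have main: "a + n < b \<longrightarrow> (F!(a+n), F!Suc(a+n)) \<in> pedges T" for n
  proof (induction n)
    case 0
    show ?case
    proof
      assume "a + 0 < b"
      have "a \<noteq> length F - 1" using ab b by linarith
      then have "F!a \<noteq> F!(length F - 1)" using dF a(1) neF by (simp add: nth_eq_iff_index_eq)
      then have "z1 \<noteq> t" using tF a by simp
      then obtain w where w: "(z1,w) \<in> pedges T" using path_succ_exists z1T Tp by metis
      then have "(F!a, w) \<in> pedges F" using succ a z1_def by simp
      then have "w = F!Suc a" using pedges_succ[OF dF] a by blast
      then show "(F!(a+0), F!Suc(a+0)) \<in> pedges T" using w a by simp
    qed
  next
    case (Suc n)
    show ?case
    proof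
      assume lt: "a + Suc n < b"
      then have "(F!(a+n), F!Suc(a+n)) \<in> pedges T" using Suc by simp
      then have xT: "F!(a + Suc n) \<in> set T" by (metis add_Suc_right pedges_snd_set)
      have nG: "F!(a + Suc n) \<notin> set G" using noncommon lt by simp
      have "t \<in> set G" using hG(2) neG last_in_set by metis
      then have "F!(a + Suc n) \<noteq> last T" using Tp nG by auto
      then obtain w where w: "(F!(a + Suc n),w) \<in> pedges T" using path_succ_exists xT by metis
      then have "(F!(a + Suc n),w) \<in> pedges F \<union> pedges G" using Tp by auto
      then have "(F!(a + Suc n),w) \<in> pedges F" using nG by (metis UnE pedges_fst_set)
      then have "w = F!Suc (a + Suc n)" using pedges_succ[OF dF] lt b by simp
      then show "(F!(a+Suc n), F!Suc(a+Suc n)) \<in> pedges T" using w by simp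
    qed
  qed
  have "a + (k - a) < b" using ak kb by simp
  then have "(F!k, F!Suc k) \<in> pedges T" using main[of "k - a"] ak by simp
  then show ?thesis using k by simp
qed




lemma arc_contra:
  assumes ufn: "update_flow_network V E s t c Fo Fu d"
    and topo: "\<forall>P. topo_order (pedges (Fo P) \<union> pedges (Fu P)) (set (Fo P) \<union> set (Fu P)) (L P)"
    and arc: "((I,j),(J,j')) \<in> dep_graph c Fo Fu d L"
    and tf: "transient_family E s t c Fo Fu d U"
    and inI: "(common_vs (Fo I) (Fu I) (L I) ! j, I) \<in> U"
    and ninJ: "(common_vs (Fo J) (Fu J) (L J) ! j', J) \<notin> U"
  shows False
proof -
  have IJ: "I \<noteq> J" and jI: "j < num_blocks Fo Fu L I" and jJ: "j' < num_blocks Fo Fu L J"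
    using arc unfolding dep_graph_def by auto
  obtain e where e: "e \<in> block_edges Fo Fu L I j" "e \<in> pedges (Fu I)"
      "e \<in> block_edges Fo Fu L J j'" "e \<in> pedges (Fo J)" "c e < d I + d J"
    using arc unfolding dep_graph_def by auto
  obtain u v where uv: "e = (u,v)" by (cases e)
  have fl: "is_flow V E s t c (d P) (Fo P)" "is_flow V E s t c (d P) (Fu P)" for P
    using ufn unfolding update_flow_network_def by auto
  then have stp: "is_st_path E s t (Fo P)" "is_st_path E s t (Fu P)" for P
    unfolding is_flow_def by auto
  then have pp: "distinct (Fo P)" "Fo P \<noteq> []" "hd (Fo P) = s" "last (Fo P) = t" "pedges (Fo P) \<subseteq> E"
    "distinct (Fu P)" "Fu P \<noteq> []" "hd (Fu P) = s" "last (Fu P) = t" "pedges (Fu P) \<subseteq> E" for P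
    unfolding is_st_path_def by auto
  have to: "distinct (L P)" "set (L P) = set (Fo P) \<union> set (Fu P)"
    "\<forall>(u,v)\<in>pedges (Fo P) \<union> pedges (Fu P). pos (L P) u < pos (L P) v" for P
    using topo unfolding topo_order_def by auto
  have tr: "transient s t Fo Fu U P" for P using tf unfolding transient_family_def by auto
  have Tpath: "is_st_path (active_edges Fo Fu U P) s t (trans_path s t Fo Fu U P)" for P
    using tr[of P] unfolding transient_def trans_path_def by (rule theI')
  have eE: "e \<in> E" using e(2) pp(10) by blast
  have cap: "(\<Sum>P\<in>{PB, PR}. if e \<in> pedges (trans_path s t Fo Fu U P) then d P else 0) \<le> c e"
    using tf eE unfolding transient_family_def by auto
  have act: "active_edges Fo Fu U P \<subseteq> pedges (Fo P) \<union> pedges (Fu P)" for P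
    unfolding active_edges_def by auto
  have zsI: "common_vs (Fo I) (Fu I) (L I) = filter (\<lambda>v. v \<in> set (Fu I) \<and> v \<in> set (Fo I)) (L I)"
    unfolding common_vs_def by (meson conj_commute)
  have zsJ: "common_vs (Fo J) (Fu J) (L J) = filter (\<lambda>v. v \<in> set (Fo J) \<and> v \<in> set (Fu J)) (L J)"
    unfolding common_vs_def by simp
  have eI: "e \<in> pedges (trans_path s t Fo Fu U I)"
    unfolding uv
  proof (rule block_edge_in_T[where F="Fu I" and G="Fo I" and L="L I" and s=s and t=t
        and zs="common_vs (Fo I) (Fu I) (L I)" and j=j and A="active_edges Fo Fu U I"])
    show "distinct (Fu I)" "distinct (Fo I)" "Fu I \<noteq> []" "Fo I \<noteq> []" "hd (Fu I) = s" "last (Fu I) = t"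
      "hd (Fo I) = s" "last (Fo I) = t" using pp by auto
    show "distinct (L I)" using to(1) by simp
    show "set (L I) = set (Fu I) \<union> set (Fo I)" using to(2) by blast
    show "\<forall>(u,v)\<in>pedges (Fu I) \<union> pedges (Fo I). pos (L I) u < pos (L I) v" using to(3)[of I] by blast
    show "common_vs (Fo I) (Fu I) (L I) = filter (\<lambda>v. v \<in> set (Fu I) \<and> v \<in> set (Fo I)) (L I)" by (rule zsI)
    show "Suc j < length (common_vs (Fo I) (Fu I) (L I))" using jI unfolding num_blocks_def by simp
    show "(u,v) \<in> pedges (Fu I)" using e(2) uv by simp
    show "pos (L I) (common_vs (Fo I) (Fu I) (L I) ! j) \<le> pos (L I) u"
      "pos (L I) v \<le> pos (L I) (common_vs (Fo I) (Fu I) (L I) ! Suc j)"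
      using e(1) uv unfolding block_edges_def block_vertices_def Let_def by auto
    show "is_st_path (active_edges Fo Fu U I) s t (trans_path s t Fo Fu U I)" by (rule Tpath)
    show "active_edges Fo Fu U I \<subseteq> pedges (Fu I) \<union> pedges (Fo I)" using act[of I] by blast
    show "\<forall>w. (common_vs (Fo I) (Fu I) (L I) ! j, w) \<in> pedges (trans_path s t Fo Fu U I) \<longrightarrow>
        (common_vs (Fo I) (Fu I) (L I) ! j, w) \<in> pedges (Fu I)"
    proof (intro allI impI)
      fix w assume "(common_vs (Fo I) (Fu I) (L I) ! j, w) \<in> pedges (trans_path s t Fo Fu U I)"
      then have "(common_vs (Fo I) (Fu I) (L I) ! j, w) \<in> active_edges Fo Fu U I"
        using Tpath[of I] unfolding is_st_path_def by blast
      then show "(common_vs (Fo I) (Fu I) (L I) ! j, w) \<in> pedges (Fu I)"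
        using inI unfolding active_edges_def by auto
    qed
  qed
  have eJ: "e \<in> pedges (trans_path s t Fo Fu U J)"
    unfolding uv
  proof (rule block_edge_in_T[where F="Fo J" and G="Fu J" and L="L J" and s=s and t=t
        and zs="common_vs (Fo J) (Fu J) (L J)" and j=j' and A="active_edges Fo Fu U J"])
    show "distinct (Fo J)" "distinct (Fu J)" "Fo J \<noteq> []" "Fu J \<noteq> []" "hd (Fo J) = s" "last (Fo J) = t"
      "hd (Fu J) = s" "last (Fu J) = t" using pp by auto
    show "distinct (L J)" using to(1) by simp
    show "set (L J) = set (Fo J) \<union> set (Fu J)" using to(2) by blast
    show "\<forall>(u,v)\<in>pedges (Fo J) \<union> pedges (Fu J). pos (L J) u < pos (L J) v" using to(3)[of J] by blast
    show "common_vs (Fo J) (Fu J) (L J) = filter (\<lambda>v. v \<in> set (Fo J) \<and> v \<in> set (Fu J)) (L J)" by (rule zsJ)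
    show "Suc j' < length (common_vs (Fo J) (Fu J) (L J))" using jJ unfolding num_blocks_def by simp
    show "(u,v) \<in> pedges (Fo J)" using e(4) uv by simp
    show "pos (L J) (common_vs (Fo J) (Fu J) (L J) ! j') \<le> pos (L J) u"
      "pos (L J) v \<le> pos (L J) (common_vs (Fo J) (Fu J) (L J) ! Suc j')"
      using e(3) uv unfolding block_edges_def block_vertices_def Let_def by auto
    show "is_st_path (active_edges Fo Fu U J) s t (trans_path s t Fo Fu U J)" by (rule Tpath)
    show "active_edges Fo Fu U J \<subseteq> pedges (Fo J) \<union> pedges (Fu J)" using act[of J] by blast
    show "\<forall>w. (common_vs (Fo J) (Fu J) (L J) ! j', w) \<in> pedges (trans_path s t Fo Fu U J) \<longrightarrow>
        (common_vs (Fo J) (Fu J) (L J) ! j', w) \<in> pedges (Fo J)"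
    proof (intro allI impI)
      fix w assume "(common_vs (Fo J) (Fu J) (L J) ! j', w) \<in> pedges (trans_path s t Fo Fu U J)"
      then have "(common_vs (Fo J) (Fu J) (L J) ! j', w) \<in> active_edges Fo Fu U J"
        using Tpath[of J] unfolding is_st_path_def by blast
      then show "(common_vs (Fo J) (Fu J) (L J) ! j', w) \<in> pedges (Fo J)"
        using ninJ unfolding active_edges_def by auto
    qed
  qed
  have "(\<Sum>P\<in>{PB, PR}. if e \<in> pedges (trans_path s t Fo Fu U P) then d P else 0) = d I + d J"
    using IJ eI eJ by (cases I; cases J) auto
  then show False using cap e(5) by simp
qed




theorem mainTheorem4:
  fixes V :: "'v set" and E :: "('v \<times> 'v) set" and s t :: 'v
    and c :: "'v \<times> 'v \<Rightarrow> nat" and Fo Fu L :: "pid \<Rightarrow> 'v list" and d :: "pid \<Rightarrow> nat"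
  assumes "update_flow_network V E s t c Fo Fu d"
    and "\<forall>P. acyclic (pedges (Fo P) \<union> pedges (Fu P))"
    and "\<forall>P. topo_order (pedges (Fo P) \<union> pedges (Fu P)) (set (Fo P) \<union> set (Fu P)) (L P)"
    and "\<exists>x. (x, x) \<in> (dep_graph c Fo Fu d L)\<^sup>+"
  shows "\<not> (\<exists>rs. feasible_update_sequence V E s t c Fo Fu d rs)"
proof
  assume "\<exists>rs. feasible_update_sequence V E s t c Fo Fu d rs"
  then obtain rs where rs: "feasible_update_sequence V E s t c Fo Fu d rs" by blast
  have us: "update_sequence V rs" and fe: "\<And>i S. i < length rs \<Longrightarrow> S \<subseteq> rs ! i \<Longrightarrow>
      transient_family E s t c Fo Fu d (S \<union> \<Union>(set (take i rs)))"
    using rs unfolding feasible_update_sequence_def by auto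
  have disj: "\<And>i j. i < length rs \<Longrightarrow> j < length rs \<Longrightarrow> i \<noteq> j \<Longrightarrow> rs ! i \<inter> rs ! j = {}"
    and cov: "\<Union>(set rs) = V \<times> UNIV" using us unfolding update_sequence_def by auto
  define zv where "zv = (\<lambda>(P::pid, j::nat). (common_vs (Fo P) (Fu P) (L P) ! j, P))"
  define idx where "idx = (\<lambda>y. SOME i. i < length rs \<and> y \<in> rs ! i)"
  have idx_unique: "i = k" if "i < length rs" "y \<in> rs ! i" "k < length rs" "y \<in> rs ! k" for i k y
    using disj that by blast
  have fl: "set (Fo P) \<subseteq> V" for P
    using assms(1) unfolding update_flow_network_def is_flow_def by auto
  have zvV: "fst (zv b) \<in> V" if "b \<in> Domain (dep_graph c Fo Fu d L) \<union> Range (dep_graph c Fo Fu d L)" for b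
  proof -
    obtain P j where b: "b = (P,j)" by (cases b)
    have "j < num_blocks Fo Fu L P" using that unfolding b dep_graph_def by auto
    then have "j < length (common_vs (Fo P) (Fu P) (L P))" unfolding num_blocks_def by simp
    then have "common_vs (Fo P) (Fu P) (L P) ! j \<in> set (common_vs (Fo P) (Fu P) (L P))" by simp
    then have "common_vs (Fo P) (Fu P) (L P) ! j \<in> set (Fo P)" unfolding common_vs_def by simp
    then show ?thesis using fl unfolding zv_def b by auto
  qed
  have idx_prop: "idx y < length rs \<and> y \<in> rs ! idx y" if "fst y \<in> V" for y
  proof -
    have "y \<in> \<Union>(set rs)" using cov that by (cases y) auto
    then have "\<exists>i. i < length rs \<and> y \<in> rs ! i" by (metis UnionE in_set_conv_nth)
    then show ?thesis unfolding idx_def by (rule someI_ex)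
  qed
  have arc_lt: "idx (zv b2) < idx (zv b1)" if arc: "(b1, b2) \<in> dep_graph c Fo Fu d L" for b1 b2
  proof (rule ccontr)
    assume "\<not> ?thesis"
    then have le: "idx (zv b1) \<le> idx (zv b2)" by simp
    obtain I j where b1: "b1 = (I,j)" by (cases b1)
    obtain J j' where b2: "b2 = (J,j')" by (cases b2)
    have IJ: "I \<noteq> J" using arc unfolding b1 b2 dep_graph_def by auto
    have p1: "idx (zv b1) < length rs \<and> zv b1 \<in> rs ! idx (zv b1)" using idx_prop zvV arc by blast
    have p2: "idx (zv b2) < length rs \<and> zv b2 \<in> rs ! idx (zv b2)" using idx_prop zvV arc by blast
    define i1 where "i1 = idx (zv b1)"
    define U where "U = {zv b1} \<union> \<Union>(set (take i1 rs))"
    have tfU: "transient_family E s t c Fo Fu d U" unfolding U_def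
      using fe[of i1 "{zv b1}"] p1 unfolding i1_def by auto
    have in1: "zv b1 \<in> U" unfolding U_def by simp
    have ne: "zv b2 \<noteq> zv b1" using IJ unfolding zv_def b1 b2 by simp
    have nin2: "zv b2 \<notin> U"
    proof
      assume "zv b2 \<in> U"
      then have "zv b2 \<in> \<Union>(set (take i1 rs))" using ne unfolding U_def by simp
      then obtain r where r: "r \<in> set (take i1 rs)" "zv b2 \<in> r" by blast
      then obtain k where k: "k < length (take i1 rs)" "take i1 rs ! k = r" by (metis in_set_conv_nth)
      have kk: "k < i1" "k < length rs" "rs ! k = r" using k by auto
      then have "k = idx (zv b2)" using idx_unique p2 r(2) by blast
      then show False using kk(1) le unfolding i1_def by simp
    qed
    show False
      using arc_contra[OF assms(1) assms(3), of I j J j' U] arc tfU in1 nin2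
      unfolding b1 b2 zv_def by simp
  qed
  have "idx (zv b) < idx (zv a)" if "(a, b) \<in> (dep_graph c Fo Fu d L)\<^sup>+" for a b
    using that
  proof (induction rule: trancl_induct)
    case (base y) then show ?case by (rule arc_lt)
  next
    case (step y z)
    then show ?case using arc_lt[of y z] by simp
  qed
  then show False using assms(4) by blast
qed


end
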